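(* Assume Hypothesis (H). Let $T\in\mathcal M$, let $\mathfrak k$ be a Lie subalgebra with $\mathfrak h\subsetneq\mathfrak k$, and let $\tau>0$. Then the set $\mathcal C(\mathfrak k,\tau)=\{g\in\mathcal M_T(\mathfrak k):\lambda_+(g)\le\tau\}$ is compact in $\mathcal M_T(\mathfrak k)$.
   Context: Let $G$ be a compact connected Lie group with Lie algebra $\mathfrak g$ and $H<G$ a closed connected subgroup with Lie algebra $\mathfrak h$; $M=G/H$, $\dim M\ge3$. Fix an $\mathrm{Ad}(G)$-invariant inner product $Q$ on $\mathfrak g$; $\mathfrak v\ominus\mathfrak u$ is the $Q$-orthogonal complement; $\mathfrak m=\mathfrak g\ominus\mathfrak h$. $\mathcal M$ is the set of $\mathrm{Ad}(H)$-invariant inner products on $\mathfrak m$. $\mathcal M(\mathfrak k)$ is the set of $\mathrm{Ad}(H)$-invariant inner products on $\mathfrak k\ominus\mathfrak h$, with the topology inherited from the space of bilinear forms on $\mathfrak k\ominus\mathfrak h$; $\mathcal M_T(\mathfrak k)=\{g\in\mathcal M(\mathfrak k):\mathrm{tr}_gT|_{\mathfrak k\ominus\mathfrak h}=1\}$ with the subspace topology, where $\mathrm{tr}_g$ denotes trace with respect to $g$. For $g\in\mathcal M(\mathfrak k)$, $\lambda_+(g)$ is the supremum of $g(X,X)$ over $X\in\mathfrak k\ominus\mathfrak h$ with $Q(X,X)=1$. Hypothesis (H): every Lie subalgebra $\mathfrak s\subset\mathfrak g$ with $\mathfrak h\subsetneq\mathfrak s$ satisfies (1) for all nonzero $\mathrm{Ad}(H)$-invariant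 subspaces $\mathfrak u\subset\mathfrak s\ominus\mathfrak h$ and $\mathfrak v\subset\mathfrak g\ominus\mathfrak s$, the representations $\mathrm{Ad}(H)|_{\mathfrak u}$ and $\mathrm{Ad}(H)|_{\mathfrak v}$ are inequivalent; (2) $[\mathfrak r,\mathfrak s]\neq\{0\}$ for every $\mathrm{Ad}(H)$-invariant one-dimensional subspace $\mathfrak r\subset\mathfrak g\ominus\mathfrak s$. *)

theory Defs
  imports "HOL-Analysis.Analysis"
begin

text \<open>The Lie algebra g is modelled by a euclidean_space type 'a, whose inner product
plays the role of the Ad(G)-invariant inner product Q; the bracket is br.\<close>

definition compact_lie_bracket :: "('a::euclidean_space \<Rightarrow> 'a \<Rightarrow> 'a) \<Rightarrow> bool" where
  "compact_lie_bracket br \<longleftrightarrow>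
     bilinear br \<and>
     (\<forall>x y. br x y = - br y x) \<and>
     (\<forall>x y z. br x (br y z) + br y (br z x) + br z (br x y) = 0) \<and>
     (\<forall>x y z. br x y \<bullet> z = - (y \<bullet> br x z))"

definition lie_subalgebra :: "('a::euclidean_space \<Rightarrow> 'a \<Rightarrow> 'a) \<Rightarrow> 'a set \<Rightarrow> bool" where
  "lie_subalgebra br s \<longleftrightarrow> subspace s \<and> (\<forall>x\<in>s. \<forall>y\<in>s. br x y \<in> s)"

definition ocompl :: "'a::euclidean_space set \<Rightarrow> 'a set \<Rightarrow> 'a set" where
  "ocompl v u = {x \<in> v. \<forall>y\<in>u. x \<bullet> y = 0}"

text \<open>Ad(H)-invariance of a subspace (H connected: equivalent to ad(h)-invariance).\<close>
definition h_invariant_subspace ::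
  "('a::euclidean_space \<Rightarrow> 'a \<Rightarrow> 'a) \<Rightarrow> 'a set \<Rightarrow> 'a set \<Rightarrow> bool" where
  "h_invariant_subspace br h u \<longleftrightarrow> subspace u \<and> (\<forall>X\<in>h. \<forall>v\<in>u. br X v \<in> u)"

text \<open>Equivalence of the representations Ad(H)|u and Ad(H)|v
  (H connected: an H-equivariant isomorphism is the same as an h-equivariant one).\<close>
definition h_reps_equivalent ::
  "('a::euclidean_space \<Rightarrow> 'a \<Rightarrow> 'a) \<Rightarrow> 'a set \<Rightarrow> 'a set \<Rightarrow> 'a set \<Rightarrow> bool" where
  "h_reps_equivalent br h u v \<longleftrightarrow>
     (\<exists>\<phi>. linear \<phi> \<and> bij_betw \<phi> u v \<and> (\<forall>X\<in>h. \<forall>w\<in>u. \<phi> (br X w) = br X (\<phi> w)))"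

definition hypothesis_H :: "('a::euclidean_space \<Rightarrow> 'a \<Rightarrow> 'a) \<Rightarrow> 'a set \<Rightarrow> bool" where
  "hypothesis_H br h \<longleftrightarrow>
    (\<forall>s. lie_subalgebra br s \<and> h \<subset> s \<longrightarrow>
       (\<forall>u v. h_invariant_subspace br h u \<and> u \<subseteq> ocompl s h \<and> u \<noteq> {0} \<and>
              h_invariant_subspace br h v \<and> v \<subseteq> ocompl UNIV s \<and> v \<noteq> {0}
              \<longrightarrow> \<not> h_reps_equivalent br h u v) \<and>
       (\<forall>r. h_invariant_subspace br h r \<and> dim r = 1 \<and> r \<subseteq> ocompl UNIV s \<longrightarrow>
              (\<exists>x\<in>r. \<exists>y\<in>s. br x y \<noteq> 0)))"

text \<open>Ad(H)-invariant inner products on a subspace W, represented as bilinear forms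
  on W extended by zero outside W.\<close>
definition inv_inner_products ::
  "('a::euclidean_space \<Rightarrow> 'a \<Rightarrow> 'a) \<Rightarrow> 'a set \<Rightarrow> 'a set \<Rightarrow> ('a \<Rightarrow> 'a \<Rightarrow> real) set" where
  "inv_inner_products br h W =
    {b. (\<forall>x y. x \<notin> W \<or> y \<notin> W \<longrightarrow> b x y = 0) \<and>
        (\<forall>x\<in>W. \<forall>y\<in>W. \<forall>z\<in>W. b (x + y) z = b x z + b y z) \<and>
        (\<forall>x\<in>W. \<forall>z\<in>W. \<forall>c. b (c *\<^sub>R x) z = c * b x z) \<and>
        (\<forall>x\<in>W. \<forall>y\<in>W. b x y = b y x) \<and>
        (\<forall>x\<in>W. x \<noteq> 0 \<longrightarrow> b x x > 0) \<and>
        (\<forall>X\<in>h. \<forall>x\<in>W. \<forall>y\<in>W. b (br X x) y + b x (br X y) = 0)}"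

text \<open>Trace of T restricted to W with respect to the inner product g on W:
  sum of T(e,e) over a g-orthonormal basis of W (independent of the basis).\<close>
definition trace_wrt :: "'a::euclidean_space set \<Rightarrow> ('a \<Rightarrow> 'a \<Rightarrow> real) \<Rightarrow> ('a \<Rightarrow> 'a \<Rightarrow> real) \<Rightarrow> real" where
  "trace_wrt W g T = (SOME t. \<exists>B. finite B \<and> B \<subseteq> W \<and> span B = W \<and>
       (\<forall>x\<in>B. \<forall>y\<in>B. g x y = (if x = y then 1 else 0)) \<and> t = (\<Sum>e\<in>B. T e e))"

definition lambda_plus :: "'a::euclidean_space set \<Rightarrow> ('a \<Rightarrow> 'a \<Rightarrow> real) \<Rightarrow> real" where
  "lambda_plus W g = Sup {g X X | X. X \<in> W \<and> X \<bullet> X = 1}"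

end

theory Submission
  imports Defs
begin

definition bil :: "'a::euclidean_space set \<Rightarrow> ('a \<Rightarrow> 'a \<Rightarrow> real) \<Rightarrow> bool" where
  "bil W b \<longleftrightarrow> (\<forall>x\<in>W. \<forall>y\<in>W. \<forall>z\<in>W. b (x + y) z = b x z + b y z) \<and>
        (\<forall>x\<in>W. \<forall>z\<in>W. \<forall>c. b (c *\<^sub>R x) z = c * b x z) \<and>
        (\<forall>x\<in>W. \<forall>y\<in>W. b x y = b y x)"

definition pdf :: "'a::euclidean_space set \<Rightarrow> ('a \<Rightarrow> 'a \<Rightarrow> real) \<Rightarrow> bool" where
  "pdf W b \<longleftrightarrow> bil W b \<and> (\<forall>x\<in>W. x \<noteq> 0 \<longrightarrow> b x x > 0)"

definition ons :: "'a::euclidean_space set \<Rightarrow> ('a \<Rightarrow> 'a \<Rightarrow> real) \<Rightarrow> 'a set \<Rightarrow> bool" where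
  "ons W b S \<longleftrightarrow> finite S \<and> S \<subseteq> W \<and> (\<forall>x\<in>S. \<forall>y\<in>S. b x y = (if x = y then 1 else 0))"

definition onb :: "'a::euclidean_space set \<Rightarrow> ('a \<Rightarrow> 'a \<Rightarrow> real) \<Rightarrow> 'a set \<Rightarrow> bool" where
  "onb W b S \<longleftrightarrow> ons W b S \<and> span S = W"

lemma bil_symD: "bil W b \<Longrightarrow> x \<in> W \<Longrightarrow> y \<in> W \<Longrightarrow> b x y = b y x"
  unfolding bil_def by blast
lemma bil_scaleD: "bil W b \<Longrightarrow> x \<in> W \<Longrightarrow> z \<in> W \<Longrightarrow> b (c *\<^sub>R x) z = c * b x z"
  unfolding bil_def by blast
lemma bil_addD: "bil W b \<Longrightarrow> x \<in> W \<Longrightarrow> y \<in> W \<Longrightarrow> z \<in> W \<Longrightarrow> b (x + y) z = b x z + b y z"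
  unfolding bil_def by blast

lemma bil_sum_left:
  assumes W: "subspace W" and b: "bil W b" and fin: "finite I"
    and v: "\<And>i. i \<in> I \<Longrightarrow> v i \<in> W" and z: "z \<in> W"
  shows "b (\<Sum>i\<in>I. c i *\<^sub>R v i) z = (\<Sum>i\<in>I. c i * b (v i) z)"
  using fin v
proof (induction I rule: finite_induct)
  case empty
  have "b (0 *\<^sub>R z) z = 0 * b z z" using b z unfolding bil_def by blast
  then show ?case by simp
next
  case (insert i I)
  have s: "(\<Sum>i\<in>I. c i *\<^sub>R v i) \<in> W"
    using insert by (intro subspace_sum[OF W]) (auto intro: subspace_scale[OF W])
  have vi: "c i *\<^sub>R v i \<in> W" using insert by (auto intro: subspace_scale[OF W])
  have "b (\<Sum>i\<in>insert i I. c i *\<^sub>R v i) z = b (c i *\<^sub>R v i + (\<Sum>i\<in>I. c i *\<^sub>R v i)) z"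
    using insert by simp
  also have "\<dots> = b (c i *\<^sub>R v i) z + b (\<Sum>i\<in>I. c i *\<^sub>R v i) z"
    using b s vi z unfolding bil_def by blast
  also have "b (c i *\<^sub>R v i) z = c i * b (v i) z" using b insert z unfolding bil_def by blast
  finally show ?case using insert by simp
qed

lemma bil_sum_right:
  assumes W: "subspace W" and b: "bil W b" and fin: "finite I"
    and v: "\<And>i. i \<in> I \<Longrightarrow> v i \<in> W" and z: "z \<in> W"
  shows "b z (\<Sum>i\<in>I. c i *\<^sub>R v i) = (\<Sum>i\<in>I. c i * b z (v i))"
proof -
  have s: "(\<Sum>i\<in>I. c i *\<^sub>R v i) \<in> W"
    using v by (intro subspace_sum[OF W]) (auto intro: subspace_scale[OF W])
  have "b z (\<Sum>i\<in>I. c i *\<^sub>R v i) = b (\<Sum>i\<in>I. c i *\<^sub>R v i) z"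
    using b s z unfolding bil_def by blast
  also have "\<dots> = (\<Sum>i\<in>I. c i * b (v i) z)" by (rule bil_sum_left[OF assms])
  also have "\<dots> = (\<Sum>i\<in>I. c i * b z (v i))"
    using b v z unfolding bil_def by (intro sum.cong) auto
  finally show ?thesis .
qed

lemma bil_scale_both:
  assumes "bil W b" "x \<in> W" "subspace W"
  shows "b (c *\<^sub>R x) (c *\<^sub>R x) = c^2 * b x x"
proof -
  have cx: "c *\<^sub>R x \<in> W" using assms subspace_scale by blast
  have "b (c *\<^sub>R x) (c *\<^sub>R x) = c * b x (c *\<^sub>R x)" using assms cx unfolding bil_def by blast
  also have "b x (c *\<^sub>R x) = b (c *\<^sub>R x) x" using assms cx unfolding bil_def by blast
  also have "\<dots> = c * b x x" using assms unfolding bil_def by blast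
  finally show ?thesis by (simp add: power2_eq_square)
qed

lemma bil_zero: assumes "bil W b" "z \<in> W" "subspace W" shows "b 0 z = 0"
proof -
  have "b (0 *\<^sub>R z) z = 0 * b z z" using assms unfolding bil_def by blast
  then show ?thesis by simp
qed

lemma ons_expand:
  assumes W: "subspace W" and b: "bil W b" and S: "ons W b S" and x: "x \<in> span S"
  shows "x = (\<Sum>e\<in>S. b x e *\<^sub>R e)"
proof -
  have fin: "finite S" and SW: "S \<subseteq> W" using S unfolding ons_def by auto
  obtain c where xc: "x = (\<Sum>e\<in>S. c e *\<^sub>R e)" using x span_finite[OF fin] by auto
  have "b x e' = c e'" if "e' \<in> S" for e'
  proof -
    have "b x e' = (\<Sum>e\<in>S. c e * b e e')"
      unfolding xc using SW that by (intro bil_sum_left[OF W b fin]) auto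
    also have "\<dots> = (\<Sum>e\<in>S. if e = e' then c e else 0)"
      using S that unfolding ons_def by (intro sum.cong) auto
    also have "\<dots> = c e'" using fin that by simp
    finally show ?thesis .
  qed
  then show ?thesis unfolding xc by (intro sum.cong) auto
qed

lemma ons_indep:
  assumes W: "subspace W" and b: "bil W b" and S: "ons W b S"
  shows "independent S"
proof -
  have fin: "finite S" and SW: "S \<subseteq> W" using S unfolding ons_def by auto
  show ?thesis
  proof (rule independent_if_scalars_zero[OF fin])
    fix f x assume sum0: "(\<Sum>x\<in>S. f x *\<^sub>R x) = 0" and xS: "x \<in> S"
    have "b (\<Sum>e\<in>S. f e *\<^sub>R e) x = (\<Sum>e\<in>S. f e * b e x)"
      using SW xS by (intro bil_sum_left[OF W b fin]) auto
    also have "\<dots> = (\<Sum>e\<in>S. if e = x then f e else 0)"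
      using S xS unfolding ons_def by (intro sum.cong) auto
    also have "\<dots> = f x" using fin xS by simp
    finally show "f x = 0" using sum0 bil_zero[OF b _ W] xS SW by auto
  qed
qed

lemma ons_span_sub: "subspace W \<Longrightarrow> ons W b S \<Longrightarrow> span S \<subseteq> W"
  unfolding ons_def by (simp add: span_minimal)

lemma gs_extend:
  assumes W: "subspace W" and b: "pdf W b" and S: "ons W b S"
  shows "\<exists>S'. S \<subseteq> S' \<and> onb W b S'"
  using S
proof (induction "dim W - card S" arbitrary: S rule: less_induct)
  case less
  have bb: "bil W b" using b unfolding pdf_def by auto
  have fin: "finite S" and SW: "S \<subseteq> W" using less.prems unfolding ons_def by auto
  show ?case
  proof (cases "W \<subseteq> span S")
    case True
    then show ?thesis using less.prems ons_span_sub[OF W less.prems] unfolding onb_def by blast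
  next
    case False
    then obtain x where xW: "x \<in> W" and xS: "x \<notin> span S" by auto
    define y where "y = x - (\<Sum>e\<in>S. b x e *\<^sub>R e)"
    have sW: "(\<Sum>e\<in>S. b x e *\<^sub>R e) \<in> W"
      using SW by (intro subspace_sum[OF W]) (auto intro: subspace_scale[OF W])
    have yW: "y \<in> W" unfolding y_def using xW sW subspace_diff[OF W] by blast
    have "(\<Sum>e\<in>S. b x e *\<^sub>R e) \<in> span S" by (intro span_sum span_scale span_base)
    then have y0: "y \<noteq> 0" unfolding y_def using xS by auto
    have yorth: "b y e' = 0" if e': "e' \<in> S" for e'
    proof -
      have "y = 1 *\<^sub>R x + (-1) *\<^sub>R (\<Sum>e\<in>S. b x e *\<^sub>R e)" unfolding y_def by simp
      have neg: "(-1) *\<^sub>R (\<Sum>e\<in>S. b x e *\<^sub>R e) \<in> W" using sW subspace_scale[OF W] by blast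
      have "b y e' = b x e' + b ((-1) *\<^sub>R (\<Sum>e\<in>S. b x e *\<^sub>R e)) e'"
        using bil_addD[OF bb xW neg, of e'] e' SW \<open>y = 1 *\<^sub>R x + (-1) *\<^sub>R (\<Sum>e\<in>S. b x e *\<^sub>R e)\<close> by auto
      also have "b ((-1) *\<^sub>R (\<Sum>e\<in>S. b x e *\<^sub>R e)) e' = - b (\<Sum>e\<in>S. b x e *\<^sub>R e) e'"
      proof -
        have "e' \<in> W" using e' SW by auto
        then have "b ((-1) *\<^sub>R (\<Sum>e\<in>S. b x e *\<^sub>R e)) e' = (-1) * b (\<Sum>e\<in>S. b x e *\<^sub>R e) e'"
          using bil_scaleD[OF bb sW] by blast
        then show ?thesis by simp
      qed
      also have "b (\<Sum>e\<in>S. b x e *\<^sub>R e) e' = (\<Sum>e\<in>S. b x e * b e e')"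
        using SW e' by (intro bil_sum_left[OF W bb fin]) auto
      also have "\<dots> = (\<Sum>e\<in>S. if e = e' then b x e else 0)"
        using less.prems e' unfolding ons_def by (intro sum.cong) auto
      also have "\<dots> = b x e'" using fin e' by simp
      finally show ?thesis by simp
    qed
    have ypos: "b y y > 0" using b yW y0 unfolding pdf_def by auto
    define z where "z = (1 / sqrt (b y y)) *\<^sub>R y"
    have zW: "z \<in> W" unfolding z_def using yW subspace_scale[OF W] by blast
    have zz: "b z z = 1" unfolding z_def using bil_scale_both[OF bb yW W] ypos
      by (simp add: power_divide)
    have ze: "b z e = 0" "b e z = 0" if "e \<in> S" for e
    proof -
      have eW: "e \<in> W" using that SW by auto
      show "b z e = 0" unfolding z_def using bil_scaleD[OF bb yW eW] yorth[OF that] by auto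
      then show "b e z = 0" using bil_symD[OF bb zW eW] by auto
    qed
    have znS: "z \<notin> S" using ze zz by force
    have S': "ons W b (insert z S)"
      using less.prems zW zz ze unfolding ons_def by auto
    have "card (insert z S) \<le> dim W"
      using independent_card_le_dim[of "insert z S" W] ons_indep[OF W bb S'] S' unfolding ons_def by auto
    then have "dim W - card (insert z S) < dim W - card S" using znS fin by auto
    from less.hyps[OF this S'] show ?thesis by blast
  qed
qed

lemma onb_exists:
  assumes W: "subspace W" and b: "pdf W b"
  shows "\<exists>B. onb W b B"
  using gs_extend[OF W b, of "{}"] unfolding ons_def by auto

lemma parseval:
  assumes W: "subspace W" and b: "bil W b" and B: "onb W b B" and x: "x \<in> W" and y: "y \<in> W"
  shows "b x y = (\<Sum>e\<in>B. b x e * b y e)"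
proof -
  have O: "ons W b B" and sp: "span B = W" using B unfolding onb_def by auto
  have fin: "finite B" and BW: "B \<subseteq> W" using O unfolding ons_def by auto
  have "b x y = b (\<Sum>e\<in>B. b x e *\<^sub>R e) y" using ons_expand[OF W b O, of x] x sp by simp
  also have "\<dots> = (\<Sum>e\<in>B. b x e * b e y)" using BW y by (intro bil_sum_left[OF W b fin]) auto
  also have "\<dots> = (\<Sum>e\<in>B. b x e * b y e)" using b BW y unfolding bil_def by (intro sum.cong) auto
  finally show ?thesis .
qed

lemma bil_expand2:
  assumes W: "subspace W" and T: "bil W T" and fin: "finite B" and BW: "B \<subseteq> W"
  shows "T (\<Sum>f\<in>B. c f *\<^sub>R f) (\<Sum>f\<in>B. d f *\<^sub>R f) = (\<Sum>f\<in>B. \<Sum>f'\<in>B. c f * d f' * T f f')"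
proof -
  have s: "(\<Sum>f\<in>B. d f *\<^sub>R f) \<in> W"
    using BW by (intro subspace_sum[OF W]) (auto intro: subspace_scale[OF W])
  have "T (\<Sum>f\<in>B. c f *\<^sub>R f) (\<Sum>f\<in>B. d f *\<^sub>R f) = (\<Sum>f\<in>B. c f * T f (\<Sum>f\<in>B. d f *\<^sub>R f))"
    using BW s by (intro bil_sum_left[OF W T fin]) auto
  also have "\<dots> = (\<Sum>f\<in>B. c f * (\<Sum>f'\<in>B. d f' * T f f'))"
    using BW by (intro sum.cong refl arg_cong2[where f="(*)"] bil_sum_right[OF W T fin]) auto
  finally show ?thesis by (simp add: sum_distrib_left mult.assoc)
qed

lemma trace_indep:
  assumes W: "subspace W" and b: "bil W b" and T: "bil W T" and B: "onb W b B" and B': "onb W b B'"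
  shows "(\<Sum>e\<in>B. T e e) = (\<Sum>e\<in>B'. T e e)"
proof -
  have O: "ons W b B'" and sp: "span B' = W" using B' unfolding onb_def by auto
  have fin: "finite B'" and BW: "B' \<subseteq> W" using O unfolding ons_def by auto
  have finB: "finite B" and BW0: "B \<subseteq> W" using B unfolding onb_def ons_def by auto
  have "(\<Sum>e\<in>B. T e e) = (\<Sum>e\<in>B. \<Sum>f\<in>B'. \<Sum>f'\<in>B'. b e f * b e f' * T f f')"
  proof (intro sum.cong refl)
    fix e assume e: "e \<in> B"
    have "e = (\<Sum>f\<in>B'. b e f *\<^sub>R f)" using ons_expand[OF W b O, of e] e BW0 sp by auto
    then have "T e e = T (\<Sum>f\<in>B'. b e f *\<^sub>R f) (\<Sum>f\<in>B'. b e f *\<^sub>R f)" by simp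
    also have "\<dots> = (\<Sum>f\<in>B'. \<Sum>f'\<in>B'. b e f * b e f' * T f f')" by (rule bil_expand2[OF W T fin BW])
    finally show "T e e = \<dots>" .
  qed
  also have "\<dots> = (\<Sum>f\<in>B'. \<Sum>f'\<in>B'. (\<Sum>e\<in>B. b e f * b e f') * T f f')"
    by (simp add: sum_distrib_right sum.swap[of _ B])
  also have "\<dots> = (\<Sum>f\<in>B'. \<Sum>f'\<in>B'. b f f' * T f f')"
  proof (intro sum.cong refl)
    fix f f' assume f: "f \<in> B'" and f': "f' \<in> B'"
    have "b f f' = (\<Sum>e\<in>B. b f e * b f' e)" using parseval[OF W b B] f f' BW by auto
    also have "\<dots> = (\<Sum>e\<in>B. b e f * b e f')"
    proof (intro sum.cong refl)
      fix e assume "e \<in> B"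
      then have "e \<in> W" "f \<in> W" "f' \<in> W" using f f' BW BW0 by auto
      then have "b f e = b e f" "b f' e = b e f'" using bil_symD[OF b] by blast+
      then show "b f e * b f' e = b e f * b e f'" by simp
    qed
    finally show "(\<Sum>e\<in>B. b e f * b e f') * T f f' = b f f' * T f f'" by simp
  qed
  also have "\<dots> = (\<Sum>f\<in>B'. \<Sum>f'\<in>B'. if f' = f then T f f else 0)"
    using O unfolding ons_def by (intro sum.cong refl) auto
  also have "\<dots> = (\<Sum>f\<in>B'. T f f)" using fin by simp
  finally show ?thesis .
qed

lemma trace_wrt_eq:
  assumes W: "subspace W" and b: "bil W b" and T: "bil W T" and B: "onb W b B"
  shows "trace_wrt W b T = (\<Sum>e\<in>B. T e e)"
proof -
  let ?P = "\<lambda>t. \<exists>B. finite B \<and> B \<subseteq> W \<and> span B = W \<and>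
       (\<forall>x\<in>B. \<forall>y\<in>B. b x y = (if x = y then 1 else 0)) \<and> t = (\<Sum>e\<in>B. T e e)"
  have "?P (\<Sum>e\<in>B. T e e)" using B unfolding onb_def ons_def by blast
  then have "?P (trace_wrt W b T)" unfolding trace_wrt_def by (rule someI)
  then obtain B' where "onb W b B'" "trace_wrt W b T = (\<Sum>e\<in>B'. T e e)"
    unfolding onb_def ons_def by blast
  then show ?thesis using trace_indep[OF W b T B] by simp
qed

lemma trace_ge:
  assumes W: "subspace W" and b: "pdf W b" and T: "pdf W T" and tr: "trace_wrt W b T = 1"
    and x: "x \<in> W"
  shows "T x x \<le> b x x"
proof (cases "x = 0")
  case True
  then show ?thesis using bil_zero[OF _ x W, of b] bil_zero[OF _ x W, of T] b T
    unfolding pdf_def by simp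
next
  case False
  have bb: "bil W b" and TT: "bil W T" using b T unfolding pdf_def by auto
  have pos: "b x x > 0" using b x False unfolding pdf_def by auto
  define e where "e = (1 / sqrt (b x x)) *\<^sub>R x"
  have eW: "e \<in> W" unfolding e_def using x subspace_scale[OF W] by blast
  have ee: "b e e = 1" unfolding e_def using bil_scale_both[OF bb x W] pos
    by (simp add: power_divide)
  have "ons W b {e}" using ee eW unfolding ons_def by auto
  then obtain B where eB: "e \<in> B" and B: "onb W b B" using gs_extend[OF W b] by blast
  have fin: "finite B" and BW: "B \<subseteq> W" using B unfolding onb_def ons_def by auto
  have "(\<Sum>f\<in>B. T f f) = 1" using trace_wrt_eq[OF W bb TT B] tr by simp
  moreover have "T e e \<le> (\<Sum>f\<in>B. T f f)"
  proof (rule member_le_sum[OF eB _ fin])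
    fix f assume f: "f \<in> B - {e}"
    have "b f f = 1" using B f unfolding onb_def ons_def by auto
    then have "f \<noteq> 0" using bil_zero[OF bb _ W] BW f by force
    then show "0 \<le> T f f" using T f BW unfolding pdf_def by (auto intro: less_imp_le)
  qed
  ultimately have Tee: "T e e \<le> 1" by simp
  have "T e e = (1 / sqrt (b x x))^2 * T x x" unfolding e_def by (rule bil_scale_both[OF TT x W])
  then have "T e e = T x x / b x x" using pos by (simp add: power_divide)
  then show ?thesis using Tee pos by (simp add: divide_le_eq)
qed


lemma bil_inner: "bil W (\<lambda>x y. x \<bullet> y)"
  unfolding bil_def by (auto simp: inner_add_left intro: inner_commute)

lemma pdf_inner: "pdf W (\<lambda>x y. x \<bullet> y)"
  unfolding pdf_def using bil_inner by auto

lemma onb_inner_exists: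
  assumes "subspace W" shows "\<exists>B. onb W (\<lambda>x y. x \<bullet> y) B"
proof -
  obtain B where B: "B \<subseteq> W" "pairwise orthogonal B" "\<And>x. x \<in> B \<Longrightarrow> norm x = 1"
    "independent B" "span B = W"
    using orthonormal_basis_subspace[OF assms] by metis
  have "finite B" using B(4) independent_imp_finite by auto
  moreover have "\<forall>x\<in>B. \<forall>y\<in>B. x \<bullet> y = (if x = y then 1 else 0)"
    using B(2,3) unfolding pairwise_def orthogonal_def by (auto simp: norm_eq_1)
  ultimately show ?thesis using B unfolding onb_def ons_def by blast
qed

locale setting =
  fixes W :: "'a::euclidean_space set" and T :: "'a \<Rightarrow> 'a \<Rightarrow> real" and Bq :: "'a set"
  assumes W: "subspace W" and Wnz: "W \<noteq> {0}" and Tp: "pdf W T"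
    and Bq: "onb W (\<lambda>x y. x \<bullet> y) Bq"
begin

lemma Bq_fin: "finite Bq" and Bq_sub: "Bq \<subseteq> W" and Bq_span: "span Bq = W"
  and Bq_on: "\<And>x y. x \<in> Bq \<Longrightarrow> y \<in> Bq \<Longrightarrow> x \<bullet> y = (if x = y then 1 else 0)"
  using Bq unfolding onb_def ons_def by auto

lemma TT: "bil W T" using Tp unfolding pdf_def by auto

definition P :: "'a \<Rightarrow> 'a" where "P x = (\<Sum>b\<in>Bq. (x \<bullet> b) *\<^sub>R b)"

lemma P_linear: "linear P"
  unfolding P_def by (intro linear_compose_sum) (auto intro!: linearI simp: inner_add_left scaleR_add_left)

lemma P_in: "P x \<in> W"
  unfolding P_def using Bq_sub by (intro subspace_sum[OF W]) (auto intro: subspace_scale[OF W])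

lemma P_id: "x \<in> W \<Longrightarrow> P x = x"
  using ons_expand[OF W bil_inner, of Bq x] Bq Bq_span unfolding P_def onb_def by auto

lemma P_orth: assumes "w \<in> W" shows "(x - P x) \<bullet> w = 0"
proof -
  have "w = (\<Sum>b\<in>Bq. (w \<bullet> b) *\<^sub>R b)" using P_id[OF assms] unfolding P_def by simp
  then have "x \<bullet> w = (\<Sum>b\<in>Bq. (w \<bullet> b) * (x \<bullet> b))"
    by (metis (no_types, lifting) inner_scaleR_right inner_sum_right sum.cong)
  moreover have "P x \<bullet> w = (\<Sum>b\<in>Bq. (x \<bullet> b) * (b \<bullet> w))"
    unfolding P_def by (simp add: inner_sum_left)
  ultimately show ?thesis by (simp add: inner_diff_left inner_commute mult.commute inner_diff_right)
qed

lemma P_zero: assumes "\<forall>w\<in>W. x \<bullet> w = 0" shows "P x = 0"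
  unfolding P_def using assms Bq_sub by (intro sum.neutral) (auto simp: inner_commute)

lemma P_norm: "norm (P x) \<le> norm x"
proof -
  have "P x \<bullet> (x - P x) = 0" using P_orth[OF P_in] by (simp add: inner_commute)
  then have "norm x ^ 2 = norm (P x) ^ 2 + norm (x - P x) ^ 2"
    by (metis add_diff_cancel_left' diff_add_cancel norm_add_Pythagorean orthogonal_def)
  then have "norm (P x) ^ 2 \<le> norm x ^ 2" by simp
  then show ?thesis using power2_le_imp_le by fastforce
qed

definition Tq :: "'a \<Rightarrow> real" where
  "Tq x = (\<Sum>b\<in>Bq. \<Sum>b'\<in>Bq. (x \<bullet> b) * (x \<bullet> b') * T b b')"

lemma Tq_cont: "continuous_on UNIV Tq"
  unfolding Tq_def by (intro continuous_intros)

lemma Tq_eq: "x \<in> W \<Longrightarrow> T x x = Tq x"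
proof -
  assume x: "x \<in> W"
  have "x = (\<Sum>b\<in>Bq. (x \<bullet> b) *\<^sub>R b)" using P_id[OF x] unfolding P_def by simp
  then have "T x x = T (\<Sum>b\<in>Bq. (x \<bullet> b) *\<^sub>R b) (\<Sum>b\<in>Bq. (x \<bullet> b) *\<^sub>R b)" by simp
  also have "\<dots> = Tq x" unfolding Tq_def by (rule bil_expand2[OF W TT Bq_fin Bq_sub])
  finally show ?thesis .
qed

lemma T_lower: obtains m where "m > 0" "\<And>y. y \<in> W \<Longrightarrow> m * norm y ^ 2 \<le> T y y"
proof -
  let ?S = "W \<inter> sphere 0 1"
  have cS: "compact ?S" using closed_subspace[OF W] by (intro closed_Int_compact) auto
  obtain w where w: "w \<in> W" "w \<noteq> 0" using Wnz W subspace_0 by blast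
  have "(1 / norm w) *\<^sub>R w \<in> ?S" using w subspace_scale[OF W] by auto
  then have neS: "?S \<noteq> {}" by blast
  obtain y0 where y0: "y0 \<in> ?S" and min: "\<And>y. y \<in> ?S \<Longrightarrow> Tq y0 \<le> Tq y"
    using continuous_attains_inf[OF cS neS continuous_on_subset[OF Tq_cont]] by blast
  have m: "Tq y0 > 0" using y0 Tp Tq_eq[of y0] unfolding pdf_def by auto
  show ?thesis
  proof (rule that[OF m])
    fix y assume y: "y \<in> W"
    show "Tq y0 * norm y ^ 2 \<le> T y y"
    proof (cases "y = 0")
      case True then show ?thesis using bil_zero[OF TT y W] by simp
    next
      case False
      have yS: "(1 / norm y) *\<^sub>R y \<in> ?S" using y False subspace_scale[OF W] by auto
      have "T ((1 / norm y) *\<^sub>R y) ((1 / norm y) *\<^sub>R y) = (1 / norm y)^2 * T y y"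
        by (rule bil_scale_both[OF TT y W])
      then have "Tq y0 \<le> (1 / norm y)^2 * T y y" using min[OF yS] Tq_eq yS by auto
      then show ?thesis using False by (simp add: power_divide field_simps)
    qed
  qed
qed

end


lemma lin_surj_on:
  fixes f :: "'a::euclidean_space \<Rightarrow> 'a"
  assumes W: "subspace W" and lf: "linear f" and sub: "f ` W \<subseteq> W"
    and nz: "\<And>y. y \<in> W \<Longrightarrow> y \<noteq> 0 \<Longrightarrow> f y \<noteq> 0"
  shows "f ` W = W"
proof -
  have inj: "inj_on f W"
  proof (rule inj_onI)
    fix x y assume x: "x \<in> W" and y: "y \<in> W" and e: "f x = f y"
    have "f (x - y) = 0" using e linear_diff[OF lf] by simp
    then show "x = y" using nz[of "x - y"] subspace_diff[OF W x y] by auto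
  qed
  have "dim (f ` W) = dim W"
    using dim_image_eq[OF lf] inj span_eq_iff[of W] W by metis
  then show ?thesis
    using subspace_dim_equal[OF linear_subspace_image[OF lf W] W sub] by simp
qed

locale setting2 = setting W T Bq for W :: "'a::euclidean_space set" and T Bq +
  fixes br :: "'a \<Rightarrow> 'a \<Rightarrow> 'a" and h :: "'a set" and \<tau> :: real
  assumes tau: "\<tau> > 0"
begin

definition gA :: "('a \<Rightarrow>\<^sub>L 'a) \<Rightarrow> 'a \<Rightarrow> 'a \<Rightarrow> real" where
  "gA A = (\<lambda>x y. if x \<in> W \<and> y \<in> W then blinfun_apply A x \<bullet> blinfun_apply A y else 0)"

definition C where
  "C = {g \<in> inv_inner_products br h W. trace_wrt W g T = 1 \<and> lambda_plus W g \<le> \<tau>}"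

definition K where
  "K = {A. (\<forall>x. (\<forall>w\<in>W. x \<bullet> w = 0) \<longrightarrow> blinfun_apply A x = 0) \<and>
           (\<forall>x\<in>W. blinfun_apply A x \<in> W) \<and> gA A \<in> C}"

lemma invip_pdf: "g \<in> inv_inner_products br h W \<Longrightarrow> pdf W g"
  unfolding inv_inner_products_def pdf_def bil_def by blast

lemma gA_bil: "bil W (gA A)"
  unfolding bil_def gA_def
  by (auto simp: blinfun.add_right blinfun.scaleR_right inner_add_left subspace_add[OF W]
      subspace_scale[OF W] intro: inner_commute)

lemma gA_cont: "continuous_on UNIV gA"
proof (intro continuous_on_coordinatewise_then_product)
  fix x y
  show "continuous_on UNIV (\<lambda>A. gA A x y)"
    unfolding gA_def by (cases "x \<in> W \<and> y \<in> W") (auto intro!: continuous_intros)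
qed

lemma preimage_onb:
  assumes sub: "\<forall>x\<in>W. blinfun_apply A x \<in> W"
    and nz: "\<And>y. y \<in> W \<Longrightarrow> y \<noteq> 0 \<Longrightarrow> blinfun_apply A y \<noteq> 0"
  shows "onb W (gA A) (inv_into W (blinfun_apply A) ` Bq)"
    and "trace_wrt W (gA A) T = (\<Sum>b\<in>Bq. T (inv_into W (blinfun_apply A) b) (inv_into W (blinfun_apply A) b))"
proof -
  let ?f = "blinfun_apply A" let ?u = "inv_into W (blinfun_apply A)"
  have lf: "linear ?f" using blinfun.bounded_linear_right bounded_linear.linear by blast
  have im: "?f ` W = W" using lin_surj_on[OF W lf] sub nz by blast
  have uW: "?u b \<in> W" and fu: "?f (?u b) = b" if "b \<in> Bq" for b
    using that Bq_sub im inv_into_into[of b ?f W] f_inv_into_f[of b ?f W] by auto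
  have inj: "inj_on ?u Bq" using inj_on_inv_into[of Bq ?f W] Bq_sub im by auto
  have O: "ons W (gA A) (?u ` Bq)"
    unfolding ons_def
  proof (intro conjI ballI)
    show "finite (?u ` Bq)" using Bq_fin by auto
    show "?u ` Bq \<subseteq> W" using uW by auto
  next
    fix x y assume x: "x \<in> ?u ` Bq" and y: "y \<in> ?u ` Bq"
    then obtain b b' where b: "b \<in> Bq" "x = ?u b" and b': "b' \<in> Bq" "y = ?u b'" by auto
    have "gA A x y = b \<bullet> b'" unfolding gA_def using b b' uW fu by auto
    also have "\<dots> = (if b = b' then 1 else 0)" using Bq_on b b' by auto
    also have "(b = b') = (x = y)" using b b' inj unfolding inj_on_def by auto
    finally show "gA A x y = (if x = y then 1 else 0)" .
  qed
  have ind: "independent (?u ` Bq)" using ons_indep[OF W gA_bil O] .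
  have card: "card (?u ` Bq) = dim W"
    using card_image[OF inj] Bq dim_span_eq_card_independent[of Bq]
      ons_indep[OF W bil_inner, of Bq] unfolding onb_def by auto
  have "W \<subseteq> span (?u ` Bq)" using card_eq_dim[of "?u ` Bq" W] ind card uW Bq_fin by auto
  moreover have "span (?u ` Bq) \<subseteq> W" using ons_span_sub[OF W O] .
  ultimately show B: "onb W (gA A) (?u ` Bq)" using O unfolding onb_def by auto
  show "trace_wrt W (gA A) T = (\<Sum>b\<in>Bq. T (?u b) (?u b))"
    using trace_wrt_eq[OF W gA_bil TT B] sum.reindex[OF inj] by simp
qed


lemma gA_W: "x \<in> W \<Longrightarrow> y \<in> W \<Longrightarrow> gA A x y = blinfun_apply A x \<bullet> blinfun_apply A y"
  unfolding gA_def by auto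

lemma unit_ex: "\<exists>X. X \<in> W \<and> X \<bullet> X = 1"
proof -
  obtain w where w: "w \<in> W" "w \<noteq> 0" using Wnz W subspace_0 by blast
  have "(1 / norm w) *\<^sub>R w \<in> W" using w subspace_scale[OF W] by auto
  moreover have "((1 / norm w) *\<^sub>R w) \<bullet> ((1 / norm w) *\<^sub>R w) = 1"
    using w by (simp add: power2_norm_eq_inner[symmetric] power_divide)
  ultimately show ?thesis by blast
qed

lemma lp_upper:
  assumes lp: "lambda_plus W (gA A) \<le> \<tau>" and y: "y \<in> W"
  shows "blinfun_apply A y \<bullet> blinfun_apply A y \<le> \<tau> * norm y ^ 2"
proof (cases "y = 0")
  case True then show ?thesis by simp
next
  case False
  let ?S = "{gA A X X | X. X \<in> W \<and> X \<bullet> X = 1}"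
  have bdd: "bdd_above ?S"
  proof (rule bdd_aboveI)
    fix s assume "s \<in> ?S"
    then obtain X where X: "X \<in> W" "X \<bullet> X = 1" "s = gA A X X" by auto
    have "s = norm (blinfun_apply A X) ^ 2" using X gA_W by (simp add: power2_norm_eq_inner)
    also have "\<dots> \<le> (norm A * norm X) ^ 2" by (intro power_mono norm_blinfun) auto
    also have "norm X = 1" using X by (simp add: norm_eq_1)
    finally show "s \<le> norm A ^ 2" by simp
  qed
  let ?X = "(1 / norm y) *\<^sub>R y"
  have XW: "?X \<in> W" using y subspace_scale[OF W] by auto
  have XX: "?X \<bullet> ?X = 1" using False by (simp add: power2_norm_eq_inner[symmetric] power_divide)
  have "gA A ?X ?X \<le> Sup ?S" using XW XX by (intro cSup_upper bdd) auto
  then have "gA A ?X ?X \<le> \<tau>" using lp unfolding lambda_plus_def by simp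
  moreover have "gA A ?X ?X = (1 / norm y)^2 * (blinfun_apply A y \<bullet> blinfun_apply A y)"
    using XW by (simp add: gA_W blinfun.scaleR_right power2_eq_square)
  ultimately show ?thesis using False by (simp add: power_divide field_simps)
qed

lemma K_lower: "A \<in> K \<Longrightarrow> y \<in> W \<Longrightarrow> T y y \<le> blinfun_apply A y \<bullet> blinfun_apply A y"
  using trace_ge[OF W invip_pdf Tp, of "gA A" y] gA_W[of y y A] unfolding K_def C_def by auto

lemma K_upper: "A \<in> K \<Longrightarrow> y \<in> W \<Longrightarrow> blinfun_apply A y \<bullet> blinfun_apply A y \<le> \<tau> * norm y ^ 2"
  using lp_upper unfolding K_def C_def by auto

lemma K_norm: assumes A: "A \<in> K" shows "norm A \<le> sqrt \<tau>"
proof (rule norm_blinfun_bound)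
  show "0 \<le> sqrt \<tau>" using tau by simp
  fix x
  have orth: "\<forall>w\<in>W. (x - P x) \<bullet> w = 0" using P_orth by auto
  have "blinfun_apply A (x - P x) = 0" using A orth unfolding K_def by auto
  then have e: "blinfun_apply A x = blinfun_apply A (P x)" by (simp add: blinfun.diff_right)
  have "norm (blinfun_apply A (P x)) ^ 2 \<le> \<tau> * norm (P x) ^ 2"
    using K_upper[OF A P_in, of x] power2_norm_eq_inner[of "blinfun_apply A (P x)"] by linarith
  also have "\<dots> \<le> \<tau> * norm x ^ 2" using P_norm tau by (intro mult_left_mono power_mono) auto
  also have "\<dots> = (sqrt \<tau> * norm x) ^ 2"
    using tau by (simp only: power_mult_distrib real_sqrt_pow2 less_imp_le)
  finally have sq: "norm (blinfun_apply A (P x)) ^ 2 \<le> (sqrt \<tau> * norm x) ^ 2" .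
  have "norm (blinfun_apply A (P x)) \<le> sqrt \<tau> * norm x"
    by (rule power2_le_imp_le[OF sq]) (simp add: tau less_imp_le)
  then show "norm (blinfun_apply A x) \<le> sqrt \<tau> * norm x" using e by simp
qed

lemma K_bounded: "bounded K"
  unfolding bounded_iff using K_norm by blast


lemma onb_card: assumes "subspace V" "bil V b" "onb V b B" shows "card B = dim V"
  using ons_indep[OF assms(1,2)] assms(3) dim_span_eq_card_independent unfolding onb_def by metis

lemma C_sub: assumes g: "g \<in> C" shows "\<exists>A\<in>K. gA A = g"
proof -
  have gi: "g \<in> inv_inner_products br h W" using g unfolding C_def by auto
  have gp: "pdf W g" using invip_pdf[OF gi] .
  have gb: "bil W g" using gp unfolding pdf_def by auto
  obtain B0 where B0: "onb W g B0" using onb_exists[OF W gp] by blast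
  have B0W: "B0 \<subseteq> W" and B0fin: "finite B0" using B0 unfolding onb_def ons_def by auto
  have "card Bq = card B0" using onb_card[OF W gb B0] onb_card[OF W bil_inner Bq] by simp
  then obtain \<psi> where psi: "bij_betw \<psi> Bq B0" using finite_same_card_bij Bq_fin B0fin by blast
  have psiW: "\<psi> b \<in> W" if "b \<in> Bq" for b using psi that B0W unfolding bij_betw_def by auto
  define F where "F x = (\<Sum>b\<in>Bq. g (P x) (\<psi> b) *\<^sub>R b)" for x
  have lF: "linear F"
  proof (rule linearI)
    fix x y
    have "P (x + y) = P x + P y" using linear_add[OF P_linear] .
    then show "F (x + y) = F x + F y" unfolding F_def
      using bil_addD[OF gb P_in P_in psiW] by (simp add: sum.distrib scaleR_add_left)
  next
    fix c x
    have "P (c *\<^sub>R x) = c *\<^sub>R P x" using linear_scale[OF P_linear] .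
    then show "F (c *\<^sub>R x) = c *\<^sub>R F x" unfolding F_def
      using bil_scaleD[OF gb P_in psiW] by (simp add: scaleR_sum_right)
  qed
  then have blF: "bounded_linear F" using linear_conv_bounded_linear by blast
  define A where "A = Blinfun F"
  have AF: "blinfun_apply A = F" unfolding A_def using bounded_linear_Blinfun_apply[OF blF] by auto
  have FW: "F x \<in> W" for x
    unfolding F_def using Bq_sub by (intro subspace_sum[OF W]) (auto intro: subspace_scale[OF W])
  have Forth: "F x = 0" if "\<forall>w\<in>W. x \<bullet> w = 0" for x
    unfolding F_def using P_zero[OF that] bil_zero[OF gb psiW W] by simp
  have eq: "gA A = g"
  proof (intro ext)
    fix x y
    show "gA A x y = g x y"
    proof (cases "x \<in> W \<and> y \<in> W")
      case True
      then have x: "x \<in> W" and y: "y \<in> W" by auto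
      have "gA A x y = F x \<bullet> F y" using gA_W[OF x y] AF by simp
      also have "\<dots> = (\<Sum>b\<in>Bq. \<Sum>b'\<in>Bq. g x (\<psi> b) * g y (\<psi> b') * (b \<bullet> b'))"
        unfolding F_def P_id[OF x] P_id[OF y]
        apply (simp add: inner_sum_left inner_sum_right sum_distrib_left mult.assoc)
        apply (subst sum.swap)
        apply (simp add: mult_ac inner_commute)
        done
      also have "\<dots> = (\<Sum>b\<in>Bq. \<Sum>b'\<in>Bq. if b' = b then g x (\<psi> b) * g y (\<psi> b) else 0)"
        using Bq_on by (intro sum.cong refl) auto
      also have "\<dots> = (\<Sum>b\<in>Bq. g x (\<psi> b) * g y (\<psi> b))" using Bq_fin by simp
      also have "\<dots> = (\<Sum>e\<in>B0. g x e * g y e)"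
        using sum.reindex_bij_betw[OF psi, of "\<lambda>e. g x e * g y e"] by simp
      also have "\<dots> = g x y" using parseval[OF W gb B0 x y] by simp
      finally show ?thesis .
    next
      case False
      then show ?thesis using gi unfolding gA_def inv_inner_products_def by auto
    qed
  qed
  have "A \<in> K" unfolding K_def using eq g AF FW Forth by auto
  then show ?thesis using eq by blast
qed


lemma K_closed: "closed K"
  unfolding closed_sequential_limits
proof (intro allI impI, elim conjE)
  fix An :: "nat \<Rightarrow> 'a \<Rightarrow>\<^sub>L 'a" and A
  assume AnK: "\<forall>n. An n \<in> K" and lim: "An \<longlonglongrightarrow> A"
  have app: "(\<lambda>n. blinfun_apply (An n) x) \<longlonglongrightarrow> blinfun_apply A x" for x
    using blinfun.tendsto[OF lim tendsto_const] .
  have gconv: "(\<lambda>n. gA (An n) x y) \<longlonglongrightarrow> gA A x y" for x y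
    unfolding gA_def by (cases "x \<in> W \<and> y \<in> W") (auto intro!: tendsto_inner app)
  have orth: "blinfun_apply A x = 0" if "\<forall>w\<in>W. x \<bullet> w = 0" for x
  proof -
    have "\<forall>n. blinfun_apply (An n) x = 0" using AnK that unfolding K_def by auto
    then show ?thesis using LIMSEQ_unique[OF app[of x]] by simp
  qed
  have AW: "blinfun_apply A x \<in> W" if x: "x \<in> W" for x
  proof -
    have "\<forall>n. blinfun_apply (An n) x \<in> W" using AnK x unfolding K_def by auto
    then show ?thesis using closed_sequentially[OF closed_subspace[OF W] _ app] by blast
  qed
  have lower: "T y y \<le> blinfun_apply A y \<bullet> blinfun_apply A y" if y: "y \<in> W" for y
    by (rule LIMSEQ_le_const[OF tendsto_inner[OF app app]]) (use K_lower[OF _ y] AnK in auto)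
  have upper: "blinfun_apply A y \<bullet> blinfun_apply A y \<le> \<tau> * norm y ^ 2" if y: "y \<in> W" for y
    by (rule LIMSEQ_le_const2[OF tendsto_inner[OF app app]]) (use K_upper[OF _ y] AnK in auto)
  have nzA: "blinfun_apply A y \<noteq> 0" if "y \<in> W" "y \<noteq> 0" for y
    using lower[OF that(1)] Tp that unfolding pdf_def by fastforce
  have nzAn: "blinfun_apply (An n) y \<noteq> 0" if "y \<in> W" "y \<noteq> 0" for y n
  proof
    assume "blinfun_apply (An n) y = 0"
    then have "T y y \<le> 0" using K_lower[OF _ that(1), of "An n"] AnK by auto
    then show False using Tp that unfolding pdf_def by fastforce
  qed
  have inv: "gA A (br X x) y + gA A x (br X y) = 0" if "X \<in> h" "x \<in> W" "y \<in> W" for X x y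
  proof -
    have "\<forall>n. gA (An n) (br X x) y + gA (An n) x (br X y) = 0"
      using AnK that unfolding K_def C_def inv_inner_products_def by blast
    then show ?thesis using LIMSEQ_unique[OF tendsto_add[OF gconv gconv]] by simp
  qed
  have gi: "gA A \<in> inv_inner_products br h W"
  proof -
    have "bil W (gA A)" by (rule gA_bil)
    moreover have "\<forall>x\<in>W. x \<noteq> 0 \<longrightarrow> gA A x x > 0"
      using nzA gA_W by auto
    moreover have "\<forall>x y. x \<notin> W \<or> y \<notin> W \<longrightarrow> gA A x y = 0" unfolding gA_def by auto
    ultimately show ?thesis using inv unfolding inv_inner_products_def bil_def by blast
  qed
  have lp: "lambda_plus W (gA A) \<le> \<tau>"
    unfolding lambda_plus_def
  proof (rule cSup_least)
    show "{gA A X X |X. X \<in> W \<and> X \<bullet> X = 1} \<noteq> {}" using unit_ex by auto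
  next
    fix s assume "s \<in> {gA A X X |X. X \<in> W \<and> X \<bullet> X = 1}"
    then obtain X where X: "X \<in> W" "X \<bullet> X = 1" "s = gA A X X" by auto
    have "norm X = 1" using X by (simp add: norm_eq_1)
    then show "s \<le> \<tau>" using upper[OF X(1)] X gA_W by simp
  qed
  obtain m where m: "m > 0" "\<And>y. y \<in> W \<Longrightarrow> m * norm y ^ 2 \<le> T y y" using T_lower by blast
  let ?u = "\<lambda>b. inv_into W (blinfun_apply A) b"
  let ?un = "\<lambda>n b. inv_into W (blinfun_apply (An n)) b"
  have lfA: "linear (blinfun_apply B)" for B :: "'a \<Rightarrow>\<^sub>L 'a"
    using blinfun.bounded_linear_right bounded_linear.linear by blast
  have imA: "blinfun_apply A ` W = W" using lin_surj_on[OF W lfA] AW nzA by blast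
  have imAn: "blinfun_apply (An n) ` W = W" for n
    using lin_surj_on[OF W lfA] AnK nzAn unfolding K_def by blast
  have uW: "?u b \<in> W" "blinfun_apply A (?u b) = b" if "b \<in> Bq" for b
    using that Bq_sub imA inv_into_into[of b "blinfun_apply A" W] f_inv_into_f[of b "blinfun_apply A" W]
    by auto
  have unW: "?un n b \<in> W" "blinfun_apply (An n) (?un n b) = b" if "b \<in> Bq" for b n
    using that Bq_sub imAn[of n] inv_into_into[of b "blinfun_apply (An n)" W]
      f_inv_into_f[of b "blinfun_apply (An n)" W] by auto
  have conv: "(\<lambda>n. ?un n b) \<longlonglongrightarrow> ?u b" if b: "b \<in> Bq" for b
  proof -
    have bound: "norm (?un n b - ?u b) \<le> norm (blinfun_apply (An n) (?u b) - blinfun_apply A (?u b)) / sqrt m" for n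
    proof -
      let ?v = "?un n b - ?u b"
      have vW: "?v \<in> W" using subspace_diff[OF W unW(1)[OF b] uW(1)[OF b]] .
      have "blinfun_apply (An n) ?v = b - blinfun_apply (An n) (?u b)"
        using unW[OF b] by (simp add: blinfun.diff_right)
      also have "\<dots> = blinfun_apply A (?u b) - blinfun_apply (An n) (?u b)" using uW[OF b] by simp
      finally have e: "blinfun_apply (An n) ?v = blinfun_apply A (?u b) - blinfun_apply (An n) (?u b)" .
      have "m * norm ?v ^ 2 \<le> T ?v ?v" using m(2)[OF vW] .
      also have "\<dots> \<le> blinfun_apply (An n) ?v \<bullet> blinfun_apply (An n) ?v" using K_lower[OF _ vW] AnK by auto
      also have "\<dots> = norm (blinfun_apply (An n) (?u b) - blinfun_apply A (?u b)) ^ 2"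
        unfolding e power2_norm_eq_inner by (simp add: inner_commute inner_diff_left inner_diff_right)
      finally have "(sqrt m * norm ?v) ^ 2 \<le> norm (blinfun_apply (An n) (?u b) - blinfun_apply A (?u b)) ^ 2"
        using m(1) by (simp add: power_mult_distrib)
      then have "sqrt m * norm ?v \<le> norm (blinfun_apply (An n) (?u b) - blinfun_apply A (?u b))"
        by (rule power2_le_imp_le) simp
      then show ?thesis using m(1) by (simp add: field_simps)
    qed
    have "(\<lambda>n. norm (blinfun_apply (An n) (?u b) - blinfun_apply A (?u b)) / sqrt m) \<longlonglongrightarrow> 0"
      by (intro tendsto_divide_zero tendsto_norm_zero LIM_zero app)
    then have "(\<lambda>n. ?un n b - ?u b) \<longlonglongrightarrow> 0"
      by (rule Lim_null_comparison[rotated]) (use bound in auto)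
    then show ?thesis by (rule LIM_zero_cancel)
  qed
  have trn: "trace_wrt W (gA (An n)) T = 1" for n using AnK unfolding K_def C_def by auto
  have trn': "(\<Sum>b\<in>Bq. Tq (?un n b)) = 1" for n
  proof -
    have "(\<Sum>b\<in>Bq. Tq (?un n b)) = (\<Sum>b\<in>Bq. T (?un n b) (?un n b))"
      using unW Tq_eq by (intro sum.cong) auto
    also have "\<dots> = 1" using preimage_onb(2)[of "An n"] AnK nzAn trn[of n] unfolding K_def by auto
    finally show ?thesis .
  qed
  have TqC: "isCont Tq x" for x using Tq_cont continuous_on_eq_continuous_at by blast
  have "(\<lambda>n. \<Sum>b\<in>Bq. Tq (?un n b)) \<longlonglongrightarrow> (\<Sum>b\<in>Bq. Tq (?u b))"
    by (intro tendsto_sum isCont_tendsto_compose[OF TqC] conv)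
  then have "(\<lambda>n. 1::real) \<longlonglongrightarrow> (\<Sum>b\<in>Bq. Tq (?u b))" using trn' by simp
  then have "(\<Sum>b\<in>Bq. Tq (?u b)) = 1" using LIMSEQ_unique[OF _ tendsto_const] by metis
  moreover have "(\<Sum>b\<in>Bq. Tq (?u b)) = (\<Sum>b\<in>Bq. T (?u b) (?u b))"
    using uW Tq_eq by (intro sum.cong) auto
  ultimately have tr: "trace_wrt W (gA A) T = 1" using preimage_onb(2)[of A] AW nzA by auto
  show "A \<in> K" unfolding K_def C_def using orth AW gi tr lp by auto
qed

lemma C_compact: "compact C"
proof -
  have "C = gA ` K" using C_sub unfolding K_def by auto
  moreover have "compact K" using K_bounded K_closed compact_eq_bounded_closed by blast
  moreover have "continuous_on K gA" using continuous_on_subset[OF gA_cont] by blast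
  ultimately show ?thesis using compact_continuous_image by auto
qed

end


lemma pdf_mono: "pdf V b \<Longrightarrow> W \<subseteq> V \<Longrightarrow> pdf W b"
  unfolding pdf_def bil_def by (meson subsetD)

lemma ocompl_subspace: "subspace k \<Longrightarrow> subspace (ocompl k h)"
  unfolding subspace_def ocompl_def by (auto simp: inner_add_left)

lemma ocompl_nz:
  assumes k: "subspace k" and h: "subspace h" and hk: "h \<subset> k"
  shows "ocompl k h \<noteq> {0}"
proof -
  obtain x where xk: "x \<in> k" and xh: "x \<notin> h" using hk by auto
  obtain B where B: "onb h (\<lambda>x y. x \<bullet> y) B" using onb_inner_exists[OF h] by blast
  have fin: "finite B" and Bh: "B \<subseteq> h" and sp: "span B = h" using B unfolding onb_def ons_def by auto
  define p where "p = (\<Sum>b\<in>B. (x \<bullet> b) *\<^sub>R b)"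
  have ph: "p \<in> h" unfolding p_def using Bh by (intro subspace_sum[OF h]) (auto intro: subspace_scale[OF h])
  have yk: "x - p \<in> k" using ph hk xk subspace_diff[OF k] by auto
  have orth: "(x - p) \<bullet> w = 0" if w: "w \<in> h" for w
  proof -
    have wexp: "w = (\<Sum>b\<in>B. (w \<bullet> b) *\<^sub>R b)"
      by (rule ons_expand[OF h bil_inner]) (use B sp w in \<open>auto simp: onb_def\<close>)
    have "x \<bullet> w = x \<bullet> (\<Sum>b\<in>B. (w \<bullet> b) *\<^sub>R b)"
      using wexp by (rule arg_cong)
    also have "\<dots> = (\<Sum>b\<in>B. (w \<bullet> b) * (x \<bullet> b))" by (simp add: inner_sum_right)
    finally have "x \<bullet> w = (\<Sum>b\<in>B. (w \<bullet> b) * (x \<bullet> b))" .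
    moreover have "p \<bullet> w = (\<Sum>b\<in>B. (w \<bullet> b) * (x \<bullet> b))"
      unfolding p_def inner_sum_left by (intro sum.cong refl) (simp add: inner_commute)
    ultimately show ?thesis by (simp only: inner_diff_left)
  qed
  have m: "x - p \<in> ocompl k h" unfolding ocompl_def using yk orth by blast
  have n: "x - p \<noteq> 0"
  proof
    assume "x - p = 0"
    then have "x = p" by simp
    then show False using xh ph by simp
  qed
  show ?thesis
  proof
    assume "ocompl k h = {0}"
    then show False using m n by blast
  qed
qed

theorem mainTheorem14:
  fixes br :: "'a::euclidean_space \<Rightarrow> 'a \<Rightarrow> 'a"
    and h k :: "'a set"
    and T :: "'a \<Rightarrow> 'a \<Rightarrow> real"
    and \<tau> :: real
  assumes "compact_lie_bracket br"
    and "lie_subalgebra br h"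
    and "DIM('a) \<ge> dim h + 3"
    and "hypothesis_H br h"
    and "T \<in> inv_inner_products br h (ocompl UNIV h)"
    and "lie_subalgebra br k" and "h \<subset> k"
    and "\<tau> > 0"
  shows "compact {g \<in> inv_inner_products br h (ocompl k h).
                    trace_wrt (ocompl k h) g T = 1 \<and> lambda_plus (ocompl k h) g \<le> \<tau>}"
proof -
  let ?W = "ocompl k h"
  have k: "subspace k" and hs: "subspace h" using assms(2,6) unfolding lie_subalgebra_def by auto
  have W: "subspace ?W" using ocompl_subspace[OF k] .
  have Wnz: "?W \<noteq> {0}" using ocompl_nz[OF k hs assms(7)] .
  have Tm: "pdf (ocompl UNIV h) T" using assms(5) unfolding inv_inner_products_def pdf_def bil_def by blast
  have "?W \<subseteq> ocompl UNIV h" unfolding ocompl_def by auto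
  then have Tp: "pdf ?W T" using pdf_mono[OF Tm] by blast
  obtain Bq where Bq: "onb ?W (\<lambda>x y. x \<bullet> y) Bq" using onb_inner_exists[OF W] by blast
  interpret S: setting2 ?W T Bq br h \<tau>
    by unfold_locales (use W Wnz Tp Bq assms(8) in auto)
  from S.C_compact show ?thesis by (simp only: S.C_def)
qed

end
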